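(* Let $k \ge 1$ and $\epsilon > 0$. There does not exist a single-round asymmetric communication protocol with which, given any probability distribution $P$ with entropy $H$ over a set of $n$ possible messages, the server sends $O(n^{1/k - \epsilon})$ bits in the worst case and the client sends at most $kH + o(\log n)$ bits in the expected case (expectation over the client's message drawn from $P$).
   Context: Asymmetric communication problem: a server knows a probability distribution $P$ over a set of $n$ possible messages; a single client holds one message drawn according to $P$ and does not know $P$. The server must learn the client's message. A single-round protocol is one in which the server sends one transmission (which may depend on $P$) to the client, and the client then sends one transmission (depending on the server's transmission and its own message) from which the server must be able to recover the client's message. The entropy is $H = -\sum_x P(x)\log_2 P(x)$. Asymptotic notation $O(\cdot)$, $o(\cdot)$ is with respect to $n \to \infty$, with $k$ and $\epsilon$ fixed. *)

theory Defs
  imports Complex_Main "HOL-Library.Landau_Symbols"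
begin

definition is_distribution :: "nat \<Rightarrow> (nat \<Rightarrow> real) \<Rightarrow> bool" where
  "is_distribution n P \<longleftrightarrow>
     (\<forall>x. 0 \<le> P x) \<and> (\<forall>x. n \<le> x \<longrightarrow> P x = 0) \<and> (\<Sum>x<n. P x) = 1"

text \<open>Shannon entropy in bits (note log 2 0 = 0 in Isabelle, so 0 log 0 = 0).\<close>

definition entropy :: "nat \<Rightarrow> (nat \<Rightarrow> real) \<Rightarrow> real" where
  "entropy n P = - (\<Sum>x<n. P x * log 2 (P x))"

text \<open>A single-round protocol: the server, knowing n and P, sends S n P;
  the client, knowing n, the server's transmission and its message x,
  replies C n s x; the server decodes with D n P s c (it knows P and what it sent).\<close>

definition single_round_protocol ::
  "(nat \<Rightarrow> (nat \<Rightarrow> real) \<Rightarrow> bool list) \<Rightarrow>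
   (nat \<Rightarrow> bool list \<Rightarrow> nat \<Rightarrow> bool list) \<Rightarrow>
   (nat \<Rightarrow> (nat \<Rightarrow> real) \<Rightarrow> bool list \<Rightarrow> bool list \<Rightarrow> nat) \<Rightarrow> bool" where
  "single_round_protocol S C D \<longleftrightarrow>
     (\<forall>n P. is_distribution n P \<longrightarrow>
        (\<forall>x<n. 0 < P x \<longrightarrow> D n P (S n P) (C n (S n P) x) = x))"

end

theory Submission
  imports Defs
begin

lemma sum_lists_prod:
  fixes w :: "'a \<Rightarrow> real"
  assumes "finite B"
  shows "(\<Sum>xs\<in>{xs. set xs \<subseteq> B \<and> length xs = a}. prod_list (map w xs)) = (\<Sum>x\<in>B. w x)^a"
proof (induction a)
  case 0
  have "{xs. set xs \<subseteq> B \<and> length xs = 0} = {[]}" by auto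
  then show ?case by simp
next
  case (Suc a)
  have inj: "inj_on (\<lambda>(xs, n). n#xs) X" for X :: "('a list \<times> 'a) set" by (rule inj_onI) auto
  have fin: "finite {xs. set xs \<subseteq> B \<and> length xs = a}" by (rule finite_lists_length_eq[OF assms])
  have "(\<Sum>xs\<in>{xs. set xs \<subseteq> B \<and> length xs = Suc a}. prod_list (map w xs))
     = (\<Sum>p\<in>{xs. set xs \<subseteq> B \<and> length xs = a} \<times> B. prod_list (map w (snd p # fst p)))"
    unfolding lists_length_Suc_eq by (subst sum.reindex[OF inj]) (simp add: case_prod_beta)
  also have "\<dots> = (\<Sum>xs\<in>{xs. set xs \<subseteq> B \<and> length xs = a}. \<Sum>x\<in>B. w x * prod_list (map w xs))"
    by (simp add: sum.cartesian_product case_prod_beta)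
  also have "\<dots> = (\<Sum>xs\<in>{xs. set xs \<subseteq> B \<and> length xs = a}. prod_list (map w xs)) * (\<Sum>x\<in>B. w x)"
    by (simp add: sum_distrib_left sum_distrib_right mult.commute)
  finally show ?case using Suc by (simp add: mult.commute)
qed

lemma sum_bool_lists_le:
  fixes z :: real
  shows "(\<Sum>w\<in>{w::bool list. length w \<le> K}. z ^ length w) = (\<Sum>j\<le>K. (2*z)^j)"
proof (induction K)
  case 0
  have "{w::bool list. length w \<le> 0} = {[]}" by auto
  then show ?case by simp
next
  case (Suc K)
  have e: "{w::bool list. length w \<le> Suc K} = {w. length w \<le> K} \<union> {w. length w = Suc K}" by auto
  have f1: "finite {w::bool list. length w \<le> K}"
    using finite_lists_length_le[of "UNIV::bool set" K] by simp
  have f2: "finite {w::bool list. length w = Suc K}"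
    using finite_lists_length_eq[of "UNIV::bool set" "Suc K"] by simp
  have c2: "card {w::bool list. length w = Suc K} = 2 ^ Suc K"
    using card_lists_length_eq[of "UNIV::bool set" "Suc K"] by (simp add: card_UNIV_bool)
  have "(\<Sum>w\<in>{w::bool list. length w \<le> Suc K}. z ^ length w)
      = (\<Sum>w\<in>{w::bool list. length w \<le> K}. z ^ length w) + (\<Sum>w\<in>{w::bool list. length w = Suc K}. z ^ length w)"
    unfolding e by (rule sum.union_disjoint[OF f1 f2]) auto
  also have "(\<Sum>w\<in>{w::bool list. length w = Suc K}. z ^ length w) = (\<Sum>w\<in>{w::bool list. length w = Suc K}. z ^ Suc K)"
    by (rule sum.cong) auto
  also have "\<dots> = 2 ^ Suc K * z ^ Suc K" using c2 by simp
  finally show ?case using Suc by (simp add: power_mult_distrib)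
qed

lemma geom_le:
  fixes r :: real assumes "0 \<le> r" "r < 1"
  shows "(\<Sum>j\<le>K. r^j) \<le> 1/(1-r)"
proof -
  have "(\<Sum>j\<le>K. r^j) = (\<Sum>j<Suc K. r^j)" by (simp add: lessThan_Suc_atMost)
  also have "\<dots> = (1 - r^Suc K)/(1-r)" using assms by (subst sum_gp_strict) auto
  also have "\<dots> \<le> 1/(1-r)" using assms by (intro divide_right_mono) auto
  finally show ?thesis .
qed

lemma kraft:
  fixes f :: "nat \<Rightarrow> bool list" and z :: real
  assumes inj: "inj_on f {..<n}" and z: "0 < z" "z < 1/2"
  shows "(\<Sum>x<n. z ^ length (f x)) \<le> 1/(1-2*z)"
proof -
  define K where "K = Max (insert 0 (length ` f ` {..<n}))"
  have sub: "f ` {..<n} \<subseteq> {w. length w \<le> K}"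
    unfolding K_def by (auto intro!: Max_ge)
  have fin: "finite {w::bool list. length w \<le> K}"
    using finite_lists_length_le[of "UNIV::bool set" K] by simp
  have "(\<Sum>x<n. z ^ length (f x)) = (\<Sum>w\<in>f ` {..<n}. z ^ length w)"
    by (subst sum.reindex[OF inj]) simp
  also have "\<dots> \<le> (\<Sum>w\<in>{w::bool list. length w \<le> K}. z ^ length w)"
    using z by (intro sum_mono2[OF fin sub]) auto
  also have "\<dots> = (\<Sum>j\<le>K. (2*z)^j)" by (rule sum_bool_lists_le)
  also have "\<dots> \<le> 1/(1-2*z)" using z by (intro geom_le) auto
  finally show ?thesis .
qed


lemma sum_pow2_le: "real (\<Sum>i\<le>K. (2::nat)^i) \<le> 2^(K+1)"
  by (induction K) auto

lemma core:
  fixes \<sigma> :: "nat list \<Rightarrow> bool list" and F :: "bool list \<Rightarrow> nat \<Rightarrow> bool list" and z \<Lambda> Mr :: real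
  assumes z: "0<z" "z<1/2" and Mr: "Mr \<ge> 0"
  and len: "\<forall>xs\<in>{xs. length xs = a \<and> distinct xs \<and> set xs \<subseteq> {..<n}}. real (length (\<sigma> xs)) \<le> Mr"
  and inj: "\<forall>xs\<in>{xs. length xs = a \<and> distinct xs \<and> set xs \<subseteq> {..<n}}. inj_on (F (\<sigma> xs)) {..<n}"
  and tot: "\<forall>xs\<in>{xs. length xs = a \<and> distinct xs \<and> set xs \<subseteq> {..<n}}. real (\<Sum>x\<in>set xs. length (F (\<sigma> xs) x)) \<le> \<Lambda>"
  shows "real (card {xs. length xs = a \<and> distinct xs \<and> set xs \<subseteq> {..<n}}) * z powr \<Lambda> \<le> 2 powr (Mr+1) * (1/(1-2*z))^a"
proof -
  define Dl where "Dl = {xs. length xs = a \<and> distinct xs \<and> set xs \<subseteq> {..<n}}"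
  define La where "La = {xs. set xs \<subseteq> {..<n} \<and> length xs = a}"
  define K where "K = nat \<lfloor>Mr\<rfloor>"
  define U where "U = {s::bool list. length s \<le> K}"
  define T where "T = {s\<in>U. inj_on (F s) {..<n}}"
  define \<Phi> where "\<Phi> s xs = prod_list (map (\<lambda>x. z ^ length (F s x)) xs)" for s xs
  have finU: "finite U" unfolding U_def
    using finite_lists_length_le[of "UNIV::bool set" K] by simp
  have finT: "finite T" unfolding T_def using finU by simp
  have finLa: "finite La" unfolding La_def by (rule finite_lists_length_eq) simp
  have DlLa: "Dl \<subseteq> La" unfolding Dl_def La_def by auto
  have finDl: "finite Dl" using finite_subset[OF DlLa finLa] .
  have \<Phi>nn: "\<Phi> s xs \<ge> 0" for s xs unfolding \<Phi>_def using z by (intro prod_list_nonneg) auto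
  have step1: "z powr \<Lambda> \<le> (\<Sum>s\<in>T. \<Phi> s xs)" if xs: "xs \<in> Dl" for xs
  proof -
    let ?N = "\<Sum>x\<in>set xs. length (F (\<sigma> xs) x)"
    have "z powr \<Lambda> \<le> z powr (real ?N)"
      using tot xs z unfolding Dl_def by (intro powr_mono') auto
    also have "\<dots> = z ^ ?N" using z by (subst powr_realpow) auto
    also have "\<dots> = \<Phi> (\<sigma> xs) xs"
      unfolding \<Phi>_def power_sum using xs unfolding Dl_def
      by (simp add: prod.distinct_set_conv_list)
    also have "\<dots> \<le> (\<Sum>s\<in>T. \<Phi> s xs)"
    proof (rule member_le_sum)
      have "length (\<sigma> xs) \<le> K" using len xs unfolding Dl_def K_def by (simp add: le_nat_floor)
      then show "\<sigma> xs \<in> T" using inj xs unfolding T_def U_def Dl_def by auto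
    qed (use \<Phi>nn finT in auto)
    finally show ?thesis .
  qed
  have "real (card Dl) * z powr \<Lambda> = (\<Sum>xs\<in>Dl. z powr \<Lambda>)" by simp
  also have "\<dots> \<le> (\<Sum>xs\<in>Dl. \<Sum>s\<in>T. \<Phi> s xs)" by (intro sum_mono step1)
  also have "\<dots> = (\<Sum>s\<in>T. \<Sum>xs\<in>Dl. \<Phi> s xs)" by (rule sum.swap)
  also have "\<dots> \<le> (\<Sum>s\<in>T. \<Sum>xs\<in>La. \<Phi> s xs)"
    by (intro sum_mono sum_mono2[OF finLa DlLa] \<Phi>nn)
  also have "\<dots> = (\<Sum>s\<in>T. (\<Sum>x<n. z ^ length (F s x))^a)"
    unfolding La_def \<Phi>_def by (intro sum.cong refl sum_lists_prod) simp
  also have "\<dots> \<le> (\<Sum>s\<in>T. (1/(1-2*z))^a)"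
  proof (intro sum_mono power_mono)
    fix s assume "s \<in> T"
    then show "(\<Sum>x<n. z ^ length (F s x)) \<le> 1/(1-2*z)" unfolding T_def using kraft z by auto
  qed (use z in \<open>auto intro: sum_nonneg\<close>)
  also have "\<dots> = real (card T) * (1/(1-2*z))^a" by simp
  also have "\<dots> \<le> 2 powr (Mr+1) * (1/(1-2*z))^a"
  proof (rule mult_right_mono)
    have "card T \<le> card U" unfolding T_def using finU by (intro card_mono) auto
    also have "card U = (\<Sum>i\<le>K. 2^i)" unfolding U_def
      using card_lists_length_le[of "UNIV::bool set" K] by (simp add: card_UNIV_bool)
    finally have "real (card T) \<le> real (\<Sum>i\<le>K. (2::nat)^i)" by (simp only: of_nat_le_iff)
    then have "real (card T) \<le> 2^(K+1)" using sum_pow2_le[of K] by linarith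
    also have "(2::real)^(K+1) = 2 powr (real K + 1)" by (simp add: powr_realpow[symmetric] powr_add)
    also have "\<dots> \<le> 2 powr (Mr+1)" using Mr unfolding K_def by (intro powr_mono) auto
    finally show "real (card T) \<le> 2 powr (Mr+1)" .
  qed (use z in auto)
  finally show ?thesis unfolding Dl_def .
qed


definition Pd :: "nat \<Rightarrow> nat \<Rightarrow> nat set \<Rightarrow> nat \<Rightarrow> real" where
  "Pd n a A x = (if x < n then (if x \<in> A then 1/(real a+1) else 1/((real a+1)*(real n - real a))) else 0)"

lemma sum_split_A:
  fixes h :: "nat \<Rightarrow> real"
  assumes "A \<subseteq> {..<n}"
  shows "(\<Sum>x<n. if x \<in> A then h x else h' x) = (\<Sum>x\<in>A. h x) + (\<Sum>x\<in>{..<n}-A. h' x)"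
proof -
  have "{..<n} \<inter> A = A" using assms by auto
  then show ?thesis by (simp add: sum.If_cases Diff_eq)
qed

lemma Pd_props:
  assumes A: "A \<subseteq> {..<n}" "card A = a" and an: "a < n"
  shows "is_distribution n (Pd n a A)"
    and "\<forall>x<n. 0 < Pd n a A x"
    and "entropy n (Pd n a A) = (real a * log 2 (real a+1) + log 2 ((real a+1)*(real n - real a)))/(real a+1)"
    and "\<And>lf::nat\<Rightarrow>nat. (\<Sum>x<n. Pd n a A x * real (lf x)) \<ge> (\<Sum>x\<in>A. real (lf x)) / (real a + 1)"
proof -
  have an': "real n - real a > 0" using an by simp
  have cd: "card ({..<n} - A) = n - a" using A by (simp add: card_Diff_subset finite_subset)
  have cd': "real (card ({..<n} - A)) = real n - real a" using cd an by simp
  have PdS: "(\<Sum>x<n. h (Pd n a A x)) = real a * h (1/(real a+1)) + (real n - real a) * h (1/((real a+1)*(real n - real a)))" for h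
  proof -
    have "(\<Sum>x<n. h (Pd n a A x)) = (\<Sum>x<n. if x \<in> A then h (1/(real a+1)) else h (1/((real a+1)*(real n - real a))))"
      by (intro sum.cong) (auto simp: Pd_def)
    also have "\<dots> = real a * h (1/(real a+1)) + (real n - real a) * h (1/((real a+1)*(real n - real a)))"
      using A cd' by (subst sum_split_A) auto
    finally show ?thesis .
  qed
  show "is_distribution n (Pd n a A)"
    unfolding is_distribution_def
  proof (intro conjI allI impI)
    show "0 \<le> Pd n a A x" for x using an' by (auto simp: Pd_def)
    show "n \<le> x \<Longrightarrow> Pd n a A x = 0" for x by (auto simp: Pd_def)
    have "(\<Sum>x<n. Pd n a A x) = real a * (1/(real a+1)) + (real n - real a) * (1/((real a+1)*(real n - real a)))"
      using PdS[of "\<lambda>y. y"] by simp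
    also have "\<dots> = 1"
    proof -
      have "(real n - real a) * (1/((real a+1)*(real n - real a))) = 1/(real a+1)" using an' by simp
      then show ?thesis by (simp add: field_simps)
    qed
    finally show "(\<Sum>x<n. Pd n a A x) = 1" .
  qed
  show "\<forall>x<n. 0 < Pd n a A x" using an' by (auto simp: Pd_def)
  have "entropy n (Pd n a A) = - (real a * (1/(real a+1) * log 2 (1/(real a+1))) + (real n - real a) * (1/((real a+1)*(real n - real a)) * log 2 (1/((real a+1)*(real n - real a)))))"
    unfolding entropy_def using PdS[of "\<lambda>y. y * log 2 y"] by simp
  also have "\<dots> = (real a * log 2 (real a+1) + log 2 ((real a+1)*(real n - real a)))/(real a+1)"
  proof -
    define q where "q = (real a+1)*(real n - real a)"
    have q: "q > 0" using an' unfolding q_def by simp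
    have l1: "log 2 (1/(real a+1)) = - log 2 (real a+1)" by (simp add: log_divide)
    have l2: "log 2 (1/q) = - log 2 q" using q by (simp add: log_divide)
    have t2: "(real n - real a) * (1/q * log 2 (1/q)) = - log 2 q / (real a+1)"
    proof -
      have r: "(real n - real a)/q = 1/(real a+1)" using an' by (simp add: q_def)
      have "(real n - real a) * (1/q * log 2 (1/q)) = ((real n - real a)/q) * log 2 (1/q)" by simp
      then show ?thesis unfolding r l2 by simp
    qed
    have t1: "real a * (1/(real a+1) * - log 2 (real a+1)) = - (real a * log 2 (real a+1)) / (real a+1)" by simp
    show ?thesis unfolding q_def[symmetric] t2 l1 t1 by (simp add: add_divide_distrib)
  qed
  finally show "entropy n (Pd n a A) = (real a * log 2 (real a+1) + log 2 ((real a+1)*(real n - real a)))/(real a+1)" .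
  fix lf :: "nat \<Rightarrow> nat"
  have "(\<Sum>x<n. Pd n a A x * real (lf x)) = (\<Sum>x<n. if x \<in> A then real (lf x) / (real a + 1) else real (lf x) / ((real a+1)*(real n - real a)))"
    by (intro sum.cong) (auto simp: Pd_def)
  also have "\<dots> = (\<Sum>x\<in>A. real (lf x) / (real a + 1)) + (\<Sum>x\<in>{..<n}-A. real (lf x) / ((real a+1)*(real n - real a)))"
    using A by (subst sum_split_A) auto
  also have "\<dots> \<ge> (\<Sum>x\<in>A. real (lf x) / (real a + 1))"
    using an' by (intro add_increasing2 sum_nonneg) auto
  finally show "(\<Sum>x<n. Pd n a A x * real (lf x)) \<ge> (\<Sum>x\<in>A. real (lf x)) / (real a + 1)"
    by (simp add: sum_divide_distrib)
qed


lemma protocol_bound: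
  assumes prot: "single_round_protocol S C D"
  and srv: "\<forall>P. is_distribution n P \<longrightarrow> real (length (S n P)) \<le> Mr"
  and cli: "\<forall>P. is_distribution n P \<longrightarrow> (\<Sum>x<n. P x * real (length (C n (S n P) x))) \<le> real k * entropy n P + G"
  and an: "a < n" and z: "0<z" "z<1/2"
  shows "real (card {xs. length xs = a \<and> distinct xs \<and> set xs \<subseteq> {..<n}}) *
           z powr ((real a+1) * (real k * ((real a * log 2 (real a+1) + log 2 ((real a+1)*(real n - real a)))/(real a+1)) + G))
         \<le> 2 powr (Mr+1) * (1/(1-2*z))^a"
proof -
  define Hv where "Hv = (real a * log 2 (real a+1) + log 2 ((real a+1)*(real n - real a)))/(real a+1)"
  define \<sigma> where "\<sigma> xs = S n (Pd n a (set xs))" for xs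
  let ?Dl = "{xs. length xs = a \<and> distinct xs \<and> set xs \<subseteq> {..<n}}"
  have P: "is_distribution n (Pd n a (set xs))" "\<forall>x<n. 0 < Pd n a (set xs) x"
    "entropy n (Pd n a (set xs)) = Hv"
    "(\<Sum>x<n. Pd n a (set xs) x * real (lf x)) \<ge> (\<Sum>x\<in>set xs. real (lf x)) / (real a + 1)"
    if "xs \<in> ?Dl" for xs lf
  proof -
    have c: "set xs \<subseteq> {..<n}" "card (set xs) = a" using that by (auto simp: distinct_card)
    note pp = Pd_props[OF c an]
    show "is_distribution n (Pd n a (set xs))" by (rule pp(1))
    show "\<forall>x<n. 0 < Pd n a (set xs) x" by (rule pp(2))
    show "entropy n (Pd n a (set xs)) = Hv" unfolding Hv_def by (rule pp(3))
    show "(\<Sum>x<n. Pd n a (set xs) x * real (lf x)) \<ge> (\<Sum>x\<in>set xs. real (lf x)) / (real a + 1)" by (rule pp(4))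
  qed
  have Mr: "Mr \<ge> 0"
  proof -
    have d0: "[0..<a] \<in> ?Dl" using an by auto
    have "real (length (S n (Pd n a (set [0..<a])))) \<le> Mr" by (rule srv[rule_format, OF P(1)[OF d0]])
    then show ?thesis by (smt (verit) of_nat_0_le_iff)
  qed
  have "real (card ?Dl) * z powr ((real a+1) * (real k * Hv + G)) \<le> 2 powr (Mr+1) * (1/(1-2*z))^a"
  proof (rule core[where \<sigma>=\<sigma> and F="C n"])
    show "\<forall>xs\<in>?Dl. real (length (\<sigma> xs)) \<le> Mr" unfolding \<sigma>_def using srv[rule_format, OF P(1)] by blast
    show "\<forall>xs\<in>?Dl. inj_on (C n (\<sigma> xs)) {..<n}"
    proof (intro ballI inj_onI)
      fix xs x y assume xs: "xs \<in> ?Dl" and x: "x \<in> {..<n}" and y: "y \<in> {..<n}"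
        and e: "C n (\<sigma> xs) x = C n (\<sigma> xs) y"
      have dec: "D n (Pd n a (set xs)) (\<sigma> xs) (C n (\<sigma> xs) w) = w" if "w < n" for w
        using prot[unfolded single_round_protocol_def, rule_format, OF P(1)[OF xs] that] P(2)[OF xs] that unfolding \<sigma>_def by simp
      have "x = D n (Pd n a (set xs)) (\<sigma> xs) (C n (\<sigma> xs) x)" using dec[of x] x by simp
      also have "\<dots> = D n (Pd n a (set xs)) (\<sigma> xs) (C n (\<sigma> xs) y)" using e by simp
      also have "\<dots> = y" using dec[of y] y by simp
      finally show "x = y" .
    qed
    show "\<forall>xs\<in>?Dl. real (\<Sum>x\<in>set xs. length (C n (\<sigma> xs) x)) \<le> (real a+1) * (real k * Hv + G)"
    proof
      fix xs assume xs: "xs \<in> ?Dl"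
      have "(\<Sum>x\<in>set xs. real (length (C n (\<sigma> xs) x))) / (real a + 1) \<le> real k * Hv + G"
        using P(4)[OF xs, of "\<lambda>x. length (C n (\<sigma> xs) x)"] cli P(1,3)[OF xs] unfolding \<sigma>_def
        using cli[rule_format, OF P(1)[OF xs], unfolded P(3)[OF xs]] by linarith
      then show "real (\<Sum>x\<in>set xs. length (C n (\<sigma> xs) x)) \<le> (real a+1) * (real k * Hv + G)"
        by (simp add: divide_le_eq mult.commute)
    qed
  qed (use z Mr in auto)
  then show ?thesis unfolding Hv_def .
qed


lemma protocol_nonneg:
  assumes cli: "\<forall>P. is_distribution n P \<longrightarrow> (\<Sum>x<n. P x * real (length (C n (S n P) x))) \<le> real k * entropy n P + G"
  and an: "a < n"
  shows "0 \<le> (real a+1) * (real k * ((real a * log 2 (real a+1) + log 2 ((real a+1)*(real n - real a)))/(real a+1)) + G)"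
proof -
  define A where "A = set [0..<a]"
  have c: "A \<subseteq> {..<n}" "card A = a" using an unfolding A_def by auto
  note pp = Pd_props[OF c an]
  let ?lf = "\<lambda>x. length (C n (S n (Pd n a A)) x)"
  have "0 \<le> (\<Sum>x\<in>A. real (?lf x)) / (real a + 1)" by (intro divide_nonneg_nonneg sum_nonneg) auto
  also have "\<dots> \<le> (\<Sum>x<n. Pd n a A x * real (?lf x))" by (rule pp(4))
  also have "\<dots> \<le> real k * ((real a * log 2 (real a+1) + log 2 ((real a+1)*(real n - real a)))/(real a+1)) + G"
    using cli[rule_format, OF pp(1)] unfolding pp(3) .
  finally show ?thesis by simp
qed


lemma card_Dl_ge:
  assumes "a \<le> n"
  shows "(real n - real a)^a \<le> real (card {xs. length xs = a \<and> distinct xs \<and> set xs \<subseteq> {..<n}})"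
proof -
  have c: "card {xs. length xs = a \<and> distinct xs \<and> set xs \<subseteq> {..<n}} = \<Prod>{n - a + 1..n}"
    using card_lists_distinct_length_eq[of "{..<n}" a] assms by simp
  have "(n - a)^a = (\<Prod>i\<in>{n - a + 1..n}. n - a)" using assms by simp
  also have "\<dots> \<le> \<Prod>{n - a + 1..n}" by (intro prod_mono) auto
  finally have "(n-a)^a \<le> card {xs. length xs = a \<and> distinct xs \<and> set xs \<subseteq> {..<n}}" using c by simp
  then have "real ((n-a)^a) \<le> real (card {xs. length xs = a \<and> distinct xs \<and> set xs \<subseteq> {..<n}})"
    by (simp only: of_nat_le_iff)
  then show ?thesis using assms by (simp add: of_nat_diff)
qed

lemma ln_le_4root: assumes "(x::real) \<ge> 1" shows "ln x \<le> 4 * x powr (1/4)"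
proof -
  have p: "x powr (1/4) > 0" using assms by simp
  have "ln x = 4 * ln (x powr (1/4))" using assms by (simp add: ln_powr)
  also have "\<dots> \<le> 4 * (x powr (1/4) - 1)" using ln_le_minus_one[OF p] by simp
  finally show ?thesis by simp
qed

lemma ln_1m_ge: assumes "0 \<le> (t::real)" "t \<le> 1/2" shows "ln (1 - t) \<ge> - 2 * t"
proof -
  have p: "1 / (1-t) > 0" using assms by simp
  have "ln (1/(1-t)) \<le> 1/(1-t) - 1" using ln_le_minus_one[OF p] .
  moreover have "ln (1/(1-t)) = - ln (1-t)" using assms by (simp add: ln_div)
  moreover have "1/(1-t) - 1 = t/(1-t)" using assms by (simp add: field_simps)
  moreover have "t/(1-t) \<le> 2*t" using assms by (simp add: field_simps) (metis mult_left_mono mult_1_right mult.commute)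
  ultimately show ?thesis by linarith
qed


lemma final_arith:
  fixes k q c u a t L2 \<Lambda> Mr lnna lnz :: real
  assumes k: "k \<ge> 1" and q: "q \<ge> 2"
  and main: "a * lnna + \<Lambda> * lnz \<le> (Mr+1)*L2 + a*(u/4)"
  and lnna: "lnna \<ge> k*q*u - L2"
  and lnz: "lnz \<ge> -L2 - 2*t"
  and Lnn: "\<Lambda> \<ge> 0"
  and \<Lambda>L: "\<Lambda>*L2 \<le> k*a*(L2 + (q-1)*u) + 2*k*k*q*u + (a+1)*k*u/4"
  and L2: "1/2 \<le> L2" "L2 \<le> 1"
  and t: "0 \<le> t" "t \<le> 1" "t*u \<le> 4"
  and Mr: "0 \<le> Mr" "Mr \<le> \<bar>c\<bar> * a"
  and ua: "u \<le> a" "1 \<le> a" "0 \<le> u"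
  shows "u*k/2 \<le> 2 + 11*k + 16*k*q + 34*k*k*q + \<bar>c\<bar>"
proof -
  define R where "R = k*a*(L2 + (q-1)*u) + 2*k*k*q*u + (a+1)*k*u/4"
  have a0: "a \<ge> 0" using ua by simp
  have h1: "a*lnna \<ge> a*(k*q*u - L2)" using mult_left_mono[OF lnna a0] .
  have e1: "a*(k*q*u - L2) = (a*k*q*u) - (a*L2)" by (simp add: algebra_simps)
  have h2: "\<Lambda>*lnz \<ge> \<Lambda>*(-L2 - 2*t)" using mult_left_mono[OF lnz Lnn] .
  have e2: "\<Lambda>*(-L2 - 2*t) = -(\<Lambda>*L2) - 2*(t*\<Lambda>)" by (simp add: algebra_simps)
  have h3: "\<Lambda>*L2 \<ge> \<Lambda>*(1/2)" using mult_left_mono[OF L2(1) Lnn] .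
  have \<Lambda>R: "\<Lambda>*L2 \<le> R" unfolding R_def by (rule \<Lambda>L)
  have h3': "\<Lambda> \<le> 2 * R" using h3 \<Lambda>R by linarith
  have h4: "t*\<Lambda> \<le> t*(2*R)" using mult_left_mono[OF h3' t(1)] .
  have e4: "t*(2*R) = 2*(t*R)" by simp
  have e3: "R = (a*k*L2) + (a*k*q*u) - (a*k*u) + 2*(k*k*q*u) + (a*k*u)/4 + (k*u)/4"
    unfolding R_def by (simp add: algebra_simps)
  have tR: "t*R = a*k*(L2*t) + a*k*(q-1)*(t*u) + 2*k*k*q*(t*u) + (a+1)*k*(t*u)/4"
    unfolding R_def by (simp add: algebra_simps)
  have kk: "k \<ge> 0" "a*k \<ge> 0" "a*k*(q-1) \<ge> 0" "2*k*k*q \<ge> 0" "(a+1)*k \<ge> 0"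
    using k q a0 by auto
  have L2t: "L2*t \<le> 1" using L2 t by (metis mult_le_one order.trans linorder_linear mult_nonneg_nonneg) 
  have h5: "t*R \<le> 4*(a*k*q) - 2*(a*k) + 8*(k*k*q) + k"
  proof -
    have "a*k*(L2*t) \<le> a*k" using mult_left_mono[OF L2t kk(2)] by simp
    moreover have "a*k*(q-1)*(t*u) \<le> a*k*(q-1)*4" using mult_left_mono[OF t(3) kk(3)] .
    moreover have "2*k*k*q*(t*u) \<le> 2*k*k*q*4" using mult_left_mono[OF t(3) kk(4)] .
    moreover have "(a+1)*k*(t*u) \<le> (a+1)*k*4" using mult_left_mono[OF t(3) kk(5)] .
    moreover have "a*k*(q-1)*4 = 4*(a*k*q) - 4*(a*k)" by (simp add: algebra_simps)
    moreover have "2*k*k*q*4 = 8*(k*k*q)" by (simp add: algebra_simps)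
    moreover have "(a+1)*k*4 = 4*(a*k) + 4*k" by (simp add: algebra_simps)
    ultimately show ?thesis unfolding tR by linarith
  qed
  have h6: "(Mr+1)*L2 \<le> \<bar>c\<bar>*a + 1"
  proof -
    have "(Mr+1)*L2 \<le> (Mr+1)*1" using Mr L2 by (intro mult_left_mono) auto
    then have "(Mr+1)*L2 \<le> Mr+1" by simp
    then show ?thesis using Mr by linarith
  qed
  have e5: "a*(u/4) = (a*u)/4" by simp
  have key: "3/4*(a*k*u) - (a*u)/4 \<le> (a*L2) + (a*k*L2) + 2*(k*k*q*u) + (k*u)/4 + 4*(4*(a*k*q) - 2*(a*k) + 8*(k*k*q) + k) + \<bar>c\<bar>*a + 1"
  proof -
    have h1': "(a*k*q*u) - (a*L2) \<le> a*lnna" using h1 unfolding e1 .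
    have h2': "-(\<Lambda>*L2) - 2*(t*\<Lambda>) \<le> \<Lambda>*lnz" using h2 unfolding e2 .
    have h4': "t*\<Lambda> \<le> 2*(t*R)" using h4 unfolding e4 .
    have m': "a * lnna + \<Lambda> * lnz \<le> (Mr+1)*L2 + (a*u)/4" using main unfolding e5 .
    have R': "\<Lambda>*L2 \<le> (a*k*L2) + (a*k*q*u) - (a*k*u) + 2*(k*k*q*u) + (a*k*u)/4 + (k*u)/4" using \<Lambda>R unfolding e3 .
    show ?thesis using h1' h2' h4' m' R' h5 h6 by argo
  qed
  have b1: "a*u*(k/2) \<le> 3/4*(a*k*u) - (a*u)/4"
  proof -
    have "0 \<le> (a*u)*((k-1)/4)" using k ua by simp
    then show ?thesis by (simp add: algebra_simps)
  qed
  have b2: "k*k*q*u \<le> k*k*q*a" using kk(4) ua by (intro mult_left_mono) auto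
  have b3: "k*u \<le> a*k" using mult_left_mono[OF ua(1) kk(1)] by (simp add: mult.commute)
  have b4: "a*L2 \<le> a" "a*k*L2 \<le> a*k" using L2 a0 kk by (auto intro: mult_left_le)
  have b5: "k*k*q \<le> k*k*q*a" using mult_left_mono[OF ua(2) kk(4)] by simp
  have b5': "k \<le> a*k" using mult_left_mono[OF ua(2) kk(1)] by (simp add: mult.commute)
  have b6: "(a*k*q) = a*(k*q)" "a*k = a*k" "k*k*q*a = a*(k*k*q)" by (simp_all add: algebra_simps)
  have "a*(u*k/2) \<le> a*(2 + 11*k + 16*k*q + 34*k*k*q + \<bar>c\<bar>)"
  proof -
    have "a*(u*k/2) = a*u*(k/2)" by simp
    moreover have "a*(2 + 11*k + 16*k*q + 34*k*k*q + \<bar>c\<bar>) = 2*a + 11*(a*k) + 16*(a*k*q) + 34*(k*k*q*a) + \<bar>c\<bar>*a"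
      by (simp add: algebra_simps)
    ultimately show ?thesis using key b1 b2 b3 b4 b5 b5' ua kk by argo
  qed
  then show ?thesis using ua by (simp add: mult_le_cancel_left_pos)
qed


lemma ln2_ge_half: "ln (2::real) \<ge> 1/2"
proof -
  have "ln (1/2::real) \<le> 1/2 - 1" by (rule ln_le_minus_one) simp
  then show ?thesis by (simp add: ln_div)
qed

theorem theorem2:
  fixes k :: nat and \<epsilon> :: real
  assumes "k \<ge> 1" and "\<epsilon> > 0"
  shows "\<not> (\<exists>S C D. single_round_protocol S C D
            \<and> (\<exists>c N. \<forall>n\<ge>N. \<forall>P. is_distribution n P \<longrightarrow>
                   real (length (S n P)) \<le> c * real n powr (1 / real k - \<epsilon>))
            \<and> (\<exists>g :: nat \<Rightarrow> real. g \<in> o(\<lambda>n. ln (real n)) \<and>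
                 (\<forall>n P. is_distribution n P \<longrightarrow>
                    (\<Sum>x<n. P x * real (length (C n (S n P) x)))
                      \<le> real k * entropy n P + g n)))"
proof
  assume "\<exists>S C D. single_round_protocol S C D
            \<and> (\<exists>c N. \<forall>n\<ge>N. \<forall>P. is_distribution n P \<longrightarrow>
                   real (length (S n P)) \<le> c * real n powr (1 / real k - \<epsilon>))
            \<and> (\<exists>g :: nat \<Rightarrow> real. g \<in> o(\<lambda>n. ln (real n)) \<and>
                 (\<forall>n P. is_distribution n P \<longrightarrow>
                    (\<Sum>x<n. P x * real (length (C n (S n P) x)))
                      \<le> real k * entropy n P + g n))"
  then obtain S C D c N g where prot: "single_round_protocol S C D"
    and srv: "\<forall>n\<ge>N. \<forall>P. is_distribution n P \<longrightarrow> real (length (S n P)) \<le> c * real n powr (1 / real k - \<epsilon>)"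
    and go: "g \<in> o(\<lambda>n. ln (real n))"
    and cli: "\<forall>n P. is_distribution n P \<longrightarrow> (\<Sum>x<n. P x * real (length (C n (S n P) x))) \<le> real k * entropy n P + g n"
    by blast
  have kpos: "real k \<ge> 1" using assms(1) by simp
  define q :: nat where "q = nat \<lceil>2/(real k*\<epsilon>)\<rceil> + 2"
  have q2: "q \<ge> 2" by (simp add: q_def)
  have kqe: "real k * real q * \<epsilon> \<ge> 2"
  proof -
    have "real q \<ge> 2/(real k*\<epsilon>)" unfolding q_def by linarith
    then have "real k * \<epsilon> * real q \<ge> real k * \<epsilon> * (2/(real k*\<epsilon>))"
      using kpos assms(2) by (intro mult_left_mono) auto
    also have "real k * \<epsilon> * (2/(real k*\<epsilon>)) = 2" using kpos assms(2) by simp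
    finally show ?thesis by (simp add: algebra_simps)
  qed
  define \<eta> where "\<eta> = 1/(4*real q)"
  have \<eta>pos: "\<eta> > 0" using q2 unfolding \<eta>_def by simp
  have "eventually (\<lambda>n. norm (g n) \<le> \<eta> * norm (ln (real n))) at_top"
    by (rule landau_o.smallD[OF go \<eta>pos])
  then obtain N1 where N1: "\<And>n. n \<ge> N1 \<Longrightarrow> \<bar>g n\<bar> \<le> \<eta> * \<bar>ln (real n)\<bar>"
    by (auto simp: eventually_at_top_linorder)
  define B where "B = 2 + 11*real k + 16*real k*real q + 34*real k*real k*real q + \<bar>c\<bar>"
  define m :: nat where "m = max (max N N1) (max 16 (nat \<lceil>exp (2*B/real k + 1)\<rceil>))"
  have mN: "m \<ge> N" "m \<ge> N1" and m16: "m \<ge> 16" unfolding m_def by auto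
  have mexp: "real m \<ge> exp (2*B/real k + 1)" unfolding m_def by linarith
  define u where "u = ln (real m)"
  have mpos: "real m > 0" using m16 by simp
  have ulow: "u \<ge> 2*B/real k + 1" unfolding u_def using ln_ge_iff[OF mpos] mexp by blast
  define n where "n = m^(k*q)"
  define a where "a = m^(q-1)"
  have kq1: "k*q \<ge> q" using assms(1) by simp
  have rn: "real n = real m ^ (k*q)" unfolding n_def by simp
  have ra: "real a = real m ^ (q-1)" unfolding a_def by simp
  have am: "a \<ge> m"
  proof -
    have "m^1 \<le> m^(q-1)" by (rule power_increasing) (use q2 m16 in auto)
    then show ?thesis unfolding a_def by simp
  qed
  have a2n: "2*a \<le> n"
  proof -
    have "2 * m^(q-1) \<le> m * m^(q-1)" using m16 by simp
    also have "m * m^(q-1) = m^(Suc (q-1))" by simp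
    also have "Suc (q-1) = q" using q2 by simp
    also have "m^q \<le> m^(k*q)" by (rule power_increasing) (use kq1 m16 in auto)
    finally show ?thesis unfolding a_def n_def .
  qed
  have an: "a < n" using a2n am m16 by linarith
  have nm: "n \<ge> m"
  proof -
    have "m^1 \<le> m^(k*q)" by (rule power_increasing) (use kq1 q2 m16 in auto)
    then show ?thesis unfolding n_def by simp
  qed
  have nN: "n \<ge> N" "n \<ge> N1" using nm mN by auto
  have lnn: "ln (real n) = real k * real q * u" unfolding rn u_def using mpos by (simp add: ln_realpow)
  have lna: "ln (real a) = (real q - 1) * u" unfolding ra u_def using mpos q2 by (simp add: ln_realpow of_nat_diff)
  define t where "t = real m powr (-1/4)"
  define z where "z = (1-t)/2"
  have t0: "t > 0" unfolding t_def using mpos by simp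
  have thalf: "t \<le> 1/2"
  proof -
    have "t \<le> 16 powr (-1/4)" unfolding t_def using m16 by (intro powr_mono2') auto
    moreover have "(16::real) powr (-1/4) = 1/2"
    proof -
      have e: "(16::real) = 2 powr 4" by simp
      have "(2 powr 4) powr (-1/4) = (2::real) powr (-1)" by (simp only: powr_powr) simp
      also have "(2::real) powr (-1) = 1/2" by (simp add: powr_neg_one)
      finally show ?thesis unfolding e[symmetric] .
    qed
    ultimately show ?thesis by simp
  qed
  have tu: "t*u \<le> 4"
  proof -
    have "u \<le> 4 * real m powr (1/4)" unfolding u_def using m16 by (intro ln_le_4root) auto
    then have "t*u \<le> t*(4 * real m powr (1/4))" using t0 by (intro mult_left_mono) auto
    also have "t*(4 * real m powr (1/4)) = 4 * real m powr (-1/4 + 1/4)"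
      unfolding t_def powr_add by simp
    finally show ?thesis using m16 by simp
  qed
  have z0: "0 < z" "z < 1/2" unfolding z_def using t0 thalf by auto
  have z2: "1 - 2*z = t" unfolding z_def by (simp add: field_simps)
  define Mr where "Mr = c * real n powr (1 / real k - \<epsilon>)"
  have srvn: "\<forall>P. is_distribution n P \<longrightarrow> real (length (S n P)) \<le> Mr"
    using srv nN unfolding Mr_def by blast
  have clin: "\<forall>P. is_distribution n P \<longrightarrow> (\<Sum>x<n. P x * real (length (C n (S n P) x))) \<le> real k * entropy n P + g n"
    using cli by blast
  define \<Lambda> where "\<Lambda> = (real a+1) * (real k * ((real a * log 2 (real a+1) + log 2 ((real a+1)*(real n - real a)))/(real a+1)) + g n)"
  note PB = protocol_bound[where C=C and S=S and D=D and k=k and G="g n" and n=n and a=a and Mr=Mr and z=z, OF prot srvn clin an z0, folded \<Lambda>_def]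
  note LN = protocol_nonneg[where C=C and S=S and k=k and G="g n" and n=n and a=a, OF clin an, folded \<Lambda>_def]
  note CD = card_Dl_ge[of a n]
  have main: "real a * ln (real n - real a) + \<Lambda> * ln z \<le> (Mr+1) * ln 2 + real a * (u/4)"
  proof -
    let ?X = "real (card {xs. length xs = a \<and> distinct xs \<and> set xs \<subseteq> {..<n}})"
    have nma: "real n - real a > 0" using an by simp
    have CD': "(real n - real a)^a \<le> ?X" using CD an by simp
    have Xpos: "?X > 0" using CD' nma by (meson order.strict_trans2 zero_less_power)
    have zp: "z powr \<Lambda> > 0" using z0 by simp
    have rp: "2 powr (Mr+1) * (1/(1-2*z))^a > 0" using z2 t0 by simp
    have "ln (?X * z powr \<Lambda>) \<le> ln (2 powr (Mr+1) * (1/(1-2*z))^a)"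
      using PB Xpos zp rp by (subst ln_le_cancel_iff) auto
    moreover have "ln (?X * z powr \<Lambda>) = ln ?X + \<Lambda> * ln z"
      using Xpos zp by (simp add: ln_mult ln_powr)
    moreover have "ln (2 powr (Mr+1) * (1/(1-2*z))^a) = (Mr+1) * ln 2 + real a * ln (1/t)"
      using t0 unfolding z2 by (simp add: ln_mult ln_realpow ln_powr)
    moreover have "real a * ln (1/t) = real a * (u/4)"
    proof -
      have "ln (1/t) = u/4" unfolding t_def u_def using mpos by (simp add: ln_div ln_powr)
      then show ?thesis by simp
    qed
    moreover have "real a * ln (real n - real a) \<le> ln ?X"
    proof -
      have "ln ((real n - real a)^a) \<le> ln ?X" using CD' nma Xpos by (subst ln_le_cancel_iff) auto
      then show ?thesis using nma by (simp add: ln_realpow)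
    qed
    ultimately show ?thesis by linarith
  qed
  have lnna: "ln (real n - real a) \<ge> real k * real q * u - ln 2"
  proof -
    have h: "real n / 2 \<le> real n - real a" using a2n by linarith
    have np: "real n > 0" using an by simp
    have "ln (real n / 2) \<le> ln (real n - real a)" using h np by (subst ln_le_cancel_iff) auto
    moreover have "ln (real n / 2) = ln (real n) - ln 2" using np by (simp add: ln_div)
    ultimately show ?thesis using lnn by linarith
  qed
  have lnz: "ln z \<ge> - ln 2 - 2*t"
  proof -
    have "ln z = ln (1-t) - ln 2" unfolding z_def using thalf by (simp add: ln_div)
    then show ?thesis using ln_1m_ge[of t] t0 thalf by linarith
  qed
  have ua: "u \<le> real a" "1 \<le> real a" "0 \<le> u"
  proof -
    have "u \<le> real m - 1" unfolding u_def using ln_le_minus_one[OF mpos] .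
    then show "u \<le> real a" using am by linarith
    show "1 \<le> real a" using am m16 by simp
    show "0 \<le> u" unfolding u_def using m16 by simp
  qed
  have \<Lambda>L: "\<Lambda> * ln 2 \<le> real k * real a * (ln 2 + (real q - 1)*u) + 2*real k*real k*real q*u + (real a+1)*real k*u/4"
  proof -
    define Xs where "Xs = real a * log 2 (real a+1) + log 2 ((real a+1)*(real n - real a))"
    have a1: "real a + 1 > 0" by simp
    have nma: "real n - real a > 0" using an by simp
    have L: "\<Lambda> = real k * Xs + (real a+1) * g n" unfolding \<Lambda>_def Xs_def[symmetric] using a1
      by (simp add: field_simps)
    have XsL: "Xs * ln 2 = real a * ln (real a+1) + ln ((real a+1)*(real n - real a))"
      unfolding Xs_def log_def by (simp add: field_simps)
    have L2: "\<Lambda> * ln 2 = real k * (real a * ln (real a+1) + ln ((real a+1)*(real n - real a))) + (real a+1) * (g n * ln 2)"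
      unfolding L XsL[symmetric] by (simp add: algebra_simps)
    have b1: "ln (real a+1) \<le> ln 2 + (real q - 1) * u"
    proof -
      have "ln (real a+1) \<le> ln (2 * real a)" using ua(2) by (subst ln_le_cancel_iff) auto
      also have "\<dots> = ln 2 + ln (real a)" using ua(2) by (simp add: ln_mult)
      finally show ?thesis using lna by simp
    qed
    have b2: "ln ((real a+1)*(real n - real a)) \<le> 2 * real k * real q * u"
    proof -
      have "(real a+1)*(real n - real a) \<le> real n * real n"
        using an nma by (intro mult_mono) auto
      then have "ln ((real a+1)*(real n - real a)) \<le> ln (real n * real n)"
        using nma by (subst ln_le_cancel_iff) auto
      also have "\<dots> = 2 * ln (real n)" using an by (simp add: ln_mult)
      finally show ?thesis using lnn by simp
    qed
    have b3: "g n * ln 2 \<le> real k * u / 4"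
    proof -
      have "g n * ln 2 \<le> \<bar>g n\<bar> * ln 2" by (intro mult_right_mono) auto
      also have "\<dots> \<le> \<bar>g n\<bar> * 1" using ln_2_less_1 by (intro mult_left_mono) auto
      also have "\<dots> \<le> \<eta> * \<bar>ln (real n)\<bar>" using N1[OF nN(2)] by simp
      also have "\<bar>ln (real n)\<bar> = real k * real q * u" using lnn ua(3) by simp
      also have "\<eta> * (real k * real q * u) = real k * u / 4" unfolding \<eta>_def using q2 by simp
      finally show ?thesis .
    qed
    have "real k * (real a * ln (real a+1) + ln ((real a+1)*(real n - real a)))
          \<le> real k * (real a * (ln 2 + (real q - 1) * u) + 2 * real k * real q * u)"
      using b1 b2 by (intro mult_left_mono add_mono) auto
    moreover have "(real a+1) * (g n * ln 2) \<le> (real a+1) * (real k * u / 4)"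
      using b3 by (intro mult_left_mono) auto
    moreover have "real k * (real a * (ln 2 + (real q - 1) * u) + 2 * real k * real q * u) + (real a+1) * (real k * u / 4)
       = real k * real a * (ln 2 + (real q - 1)*u) + 2*real k*real k*real q*u + (real a+1)*real k*u/4"
      by (simp add: algebra_simps)
    ultimately show ?thesis unfolding L2 by linarith
  qed
  have Mr: "0 \<le> Mr" "Mr \<le> \<bar>c\<bar> * real a"
  proof -
    have c0: "set [0..<a] \<subseteq> {..<n}" "card (set [0..<a]) = a" using an by auto
    have "real (length (S n (Pd n a (set [0..<a])))) \<le> Mr"
      using srvn Pd_props(1)[OF c0 an] by blast
    then show "0 \<le> Mr" by (meson of_nat_0_le_iff order.trans)
    define e where "e = 1 / real k - \<epsilon>"
    have np: "real n powr e = real m powr (real q - real k * real q * \<epsilon>)"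
    proof -
      have "real n = real m powr real (k*q)" unfolding rn using mpos by (subst powr_realpow) auto
      then have "real n powr e = real m powr (real (k*q) * e)" by (simp add: powr_powr)
      also have "real (k*q) * e = real q - real k * real q * \<epsilon>" unfolding e_def using kpos
        by (simp add: field_simps)
      finally show ?thesis .
    qed
    have "real m powr (real q - real k * real q * \<epsilon>) \<le> real m powr (real (q-1))"
      using kqe m16 q2 by (intro powr_mono) (auto simp: of_nat_diff)
    also have "real m powr (real (q-1)) = real a" unfolding ra using mpos by (subst powr_realpow) auto
    finally have npa: "real n powr e \<le> real a" unfolding np .
    have "Mr \<le> \<bar>c\<bar> * real n powr e" unfolding Mr_def e_def
      by (intro mult_right_mono) auto
    also have "\<dots> \<le> \<bar>c\<bar> * real a" using npa by (intro mult_left_mono) auto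
    finally show "Mr \<le> \<bar>c\<bar> * real a" .
  qed
  have "u * real k / 2 \<le> B"
    unfolding B_def
    by (rule final_arith[OF kpos _ main lnna lnz LN \<Lambda>L _ _ _ _ tu Mr ua])
       (use q2 ln2_ge_half ln_2_less_1 t0 thalf in auto)
  moreover have "u * real k / 2 \<ge> B + real k / 2"
  proof -
    have "u * real k \<ge> (2*B/real k + 1) * real k" using ulow kpos by (intro mult_right_mono) auto
    also have "(2*B/real k + 1) * real k = 2*B + real k" using kpos by (simp add: field_simps)
    finally show ?thesis by simp
  qed
  ultimately show False using kpos by linarith
qed

end
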